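(* Let $\{p^\circ_{(R,\alpha)}\}_{(R,\alpha)}$ be a replacement rule satisfying the Fixation Axiom and representing neutral drift, and consider the evolutionary Markov chain with $u=0$. Then for every state $\mathbf{x}\in\{0,1\}^G$, $$\lim_{t\to\infty}P^{(t)}_{\mathbf{x}\to\mathbf{A}}=\hat x.$$ In particular, for each $g\in G$, $\lim_{t\to\infty}P^{(t)}_{\mathbf{1}_{\{g\}}\to\mathbf{A}}=v_g/n$, and $\rho_A=\rho_a=\dfrac{\hat b^\circ}{n\,b^\circ}$.
   Context: Setting. $G$ is a finite nonempty set of genetic sites, $n=|G|$. A state is $\mathbf{x}\in\{0,1\}^G$ ($x_g=1$: allele $A$ at $g$; $0$: allele $a$). For $S\subseteq G$, $\mathbf{1}_S$ has $x_g=1$ iff $g\in S$; $\mathbf{a}=\mathbf{1}_\emptyset$, $\mathbf{A}=\mathbf{1}_G$. A replacement event is $(R,\alpha)$ with $R\subseteq G$, $\alpha:R\to G$. A replacement rule representing neutral drift is a single probability distribution $\{p^\circ_{(R,\alpha)}\}$ over events, used in every state. The evolutionary Markov chain with $u=0$ moves from $\mathbf{x}$ by drawing $(R,\alpha)$ with probability $p^\circ_{(R,\alpha)}$ and setting $x'_g=x_{\alpha(g)}$ for $g\in R$, $x'_g=x_g$ for $g\notin R$; $P^{(t)}_{\mathbf{x}\to\mathbf{y}}$ are $t$-step transition probabilities. Fixation Axiom: there exist $g\in G$, $m\ge1$, events $(R_k,\alpha_k)_{k=1}^m$ with $p^\circ_{(R_k,\alpha_k)}>0$, $g\in R_k$ for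 some $k$, and $\tilde\alpha_1\circ\cdots\circ\tilde\alpha_m(h)=g$ for all $h$, where $\tilde\alpha_k$ equals $\alpha_k$ on $R_k$ and the identity elsewhere. Quantities: $e^\circ_{gh}=\sum_{(R,\alpha):h\in R,\alpha(h)=g}p^\circ_{(R,\alpha)}$, $d^\circ_g=\sum_he^\circ_{hg}$, $b^\circ=\sum_{g,h}e^\circ_{gh}$. Reproductive values $(v_g)$: the unique solution of $d^\circ_gv_g=\sum_he^\circ_{gh}v_h$ for all $g$ and $\sum_gv_g=n$. $\hat x=\frac1n\sum_gv_gx_g$, $\hat b^\circ=\sum_{g,h}e^\circ_{gh}v_h$. Mutant appearance distributions: $\mu_A(\mathbf{1}_{\{g\}})=d^\circ_g/b^\circ$ (zero on other states), $\mu_a(\mathbf{1}_{G\setminus\{g\}})=d^\circ_g/b^\circ$ (zero elsewhere); $\rho_A=\sum_\mathbf{x}\mu_A(\mathbf{x})\lim_tP^{(t)}_{\mathbf{x}\to\mathbf{A}}$, $\rho_a=\sum_\mathbf{x}\mu_a(\mathbf{x})\lim_tP^{(t)}_{\mathbf{x}\to\mathbf{a}}$. *)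

theory Defs
  imports Complex_Main
begin

text \<open>Sites: the finite type 'g (G = UNIV, n = CARD('g)).  States: 'g \<Rightarrow> bool
  (x g = True means allele A at g).  A replacement event (R, alpha) is represented
  as a pair whose map alpha is the identity outside R (i.e. alpha is stored as
  its extension alpha-tilde); the distribution p is required to vanish on pairs
  not of this canonical form.\<close>

type_synonym 'g event = "'g set \<times> ('g \<Rightarrow> 'g)"

definition canonical_event :: "'g event \<Rightarrow> bool" where
  "canonical_event e \<longleftrightarrow> (\<forall>g. g \<notin> fst e \<longrightarrow> snd e g = g)"

definition replacement_rule :: "('g::finite event \<Rightarrow> real) \<Rightarrow> bool" where
  "replacement_rule p \<longleftrightarrow> (\<forall>e. p e \<ge> 0) \<and> (\<forall>e. p e > 0 \<longrightarrow> canonical_event e)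
     \<and> (\<Sum>e\<in>UNIV. p e) = 1"

definition apply_event :: "'g event \<Rightarrow> ('g \<Rightarrow> bool) \<Rightarrow> ('g \<Rightarrow> bool)" where
  "apply_event e x = (\<lambda>g. if g \<in> fst e then x (snd e g) else x g)"

definition trans_prob :: "('g::finite event \<Rightarrow> real) \<Rightarrow> ('g \<Rightarrow> bool) \<Rightarrow> ('g \<Rightarrow> bool) \<Rightarrow> real" where
  "trans_prob p x y = (\<Sum>e\<in>{e. apply_event e x = y}. p e)"

fun nstep :: "('g::finite event \<Rightarrow> real) \<Rightarrow> nat \<Rightarrow> ('g \<Rightarrow> bool) \<Rightarrow> ('g \<Rightarrow> bool) \<Rightarrow> real" where
  "nstep p 0 x y = (if x = y then 1 else 0)"
| "nstep p (Suc t) x y = (\<Sum>z\<in>UNIV. nstep p t x z * trans_prob p z y)"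

definition fixation_axiom :: "('g::finite event \<Rightarrow> real) \<Rightarrow> bool" where
  "fixation_axiom p \<longleftrightarrow> (\<exists>g es. es \<noteq> [] \<and> (\<forall>e\<in>set es. p e > 0)
      \<and> (\<exists>e\<in>set es. g \<in> fst e)
      \<and> (\<forall>h. foldr (\<circ>) (map snd es) id h = g))"

definition edge_w :: "('g::finite event \<Rightarrow> real) \<Rightarrow> 'g \<Rightarrow> 'g \<Rightarrow> real" where
  "edge_w p g h = (\<Sum>e\<in>{e. h \<in> fst e \<and> snd e h = g}. p e)"

definition death_w :: "('g::finite event \<Rightarrow> real) \<Rightarrow> 'g \<Rightarrow> real" where
  "death_w p g = (\<Sum>h\<in>UNIV. edge_w p h g)"

definition birth_total :: "('g::finite event \<Rightarrow> real) \<Rightarrow> real" where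
  "birth_total p = (\<Sum>g\<in>UNIV. \<Sum>h\<in>UNIV. edge_w p g h)"

definition repr_value :: "('g::finite event \<Rightarrow> real) \<Rightarrow> 'g \<Rightarrow> real" where
  "repr_value p = (THE v. (\<forall>g. death_w p g * v g = (\<Sum>h\<in>UNIV. edge_w p g h * v h))
                        \<and> (\<Sum>g\<in>UNIV. v g) = real (card (UNIV :: 'g set)))"

definition xhat :: "('g::finite event \<Rightarrow> real) \<Rightarrow> ('g \<Rightarrow> bool) \<Rightarrow> real" where
  "xhat p x = (1 / real (card (UNIV :: 'g set))) * (\<Sum>g\<in>UNIV. repr_value p g * (if x g then 1 else 0))"

definition bhat :: "('g::finite event \<Rightarrow> real) \<Rightarrow> real" where
  "bhat p = (\<Sum>g\<in>UNIV. \<Sum>h\<in>UNIV. edge_w p g h * repr_value p h)"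

definition ind_state :: "'g set \<Rightarrow> ('g \<Rightarrow> bool)" where
  "ind_state S = (\<lambda>g. g \<in> S)"

definition mu_A :: "('g::finite event \<Rightarrow> real) \<Rightarrow> ('g \<Rightarrow> bool) \<Rightarrow> real" where
  "mu_A p x = (\<Sum>g\<in>{g. x = ind_state {g}}. death_w p g / birth_total p)"

definition mu_a :: "('g::finite event \<Rightarrow> real) \<Rightarrow> ('g \<Rightarrow> bool) \<Rightarrow> real" where
  "mu_a p x = (\<Sum>g\<in>{g. x = ind_state (UNIV - {g})}. death_w p g / birth_total p)"

definition rho_A :: "('g::finite event \<Rightarrow> real) \<Rightarrow> real" where
  "rho_A p = (\<Sum>x\<in>UNIV. mu_A p x * lim (\<lambda>t. nstep p t x (ind_state UNIV)))"

definition rho_a :: "('g::finite event \<Rightarrow> real) \<Rightarrow> real" where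
  "rho_a p = (\<Sum>x\<in>UNIV. mu_a p x * lim (\<lambda>t. nstep p t x (ind_state {})))"

end

theory Submission imports Defs "HOL-Analysis.Analysis" begin

lemma lin_surj: "linear (f::real^'n \<Rightarrow> real^'n) \<Longrightarrow> inj f \<Longrightarrow> surj f"
  by (metis linear_injective_imp_surjective)

definition Lv :: "('g::finite \<Rightarrow> real) \<Rightarrow> ('g \<Rightarrow> bool) \<Rightarrow> real" where
  "Lv v y = (\<Sum>g\<in>UNIV. v g * (if y g then 1 else 0))"

definition monost :: "('g \<Rightarrow> bool) \<Rightarrow> bool" where
  "monost y \<longleftrightarrow> (\<exists>b. y = (\<lambda>_. b))"

definition Nm :: "('g::finite event \<Rightarrow> real) \<Rightarrow> nat \<Rightarrow> ('g \<Rightarrow> bool) \<Rightarrow> real" where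
  "Nm p t x = (\<Sum>y\<in>UNIV. if monost y then 0 else nstep p t x y)"

definition veq :: "('g::finite event \<Rightarrow> real) \<Rightarrow> ('g \<Rightarrow> real) \<Rightarrow> bool" where
  "veq p v \<longleftrightarrow> (\<forall>g. death_w p g * v g = (\<Sum>h\<in>UNIV. edge_w p g h * v h))"

lemma rr_nonneg: "replacement_rule p \<Longrightarrow> p e \<ge> 0"
  unfolding replacement_rule_def by blast

lemma delta_l: fixes x :: "'a::finite" shows "(\<Sum>z\<in>UNIV. (if x = z then 1 else 0) * f z) = (f x :: real)"
proof -
  have "(\<Sum>z\<in>UNIV. (if x = z then 1 else 0) * f z) = (\<Sum>z\<in>UNIV. if x = z then f z else 0)"
    by (intro sum.cong) auto
  then show ?thesis by (simp add: sum.delta')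
qed

lemma delta_l2: fixes x :: "'a::finite" shows "(\<Sum>z\<in>UNIV. (if z = x then 1 else 0) * f z) = (f x :: real)"
proof -
  have "(\<Sum>z\<in>UNIV. (if z = x then 1 else 0) * f z) = (\<Sum>z\<in>UNIV. if x = z then f z else 0)"
    by (intro sum.cong) auto
  then show ?thesis by (simp add: sum.delta')
qed

lemma prod_nonneg: "replacement_rule p \<Longrightarrow> 0 \<le> prod_list (map p es)"
  by (induction es) (auto simp: rr_nonneg)

lemma rr_sum: "replacement_rule p \<Longrightarrow> (\<Sum>e\<in>UNIV. p e) = 1"
  by (simp add: replacement_rule_def)

lemma trans_prob_alt: "trans_prob p x y = (\<Sum>e\<in>UNIV. if apply_event e x = y then p e else 0)"
  unfolding trans_prob_def by (simp add: sum.If_cases)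

lemma trans_expect:
  "(\<Sum>y\<in>UNIV. trans_prob p x y * f y) = (\<Sum>e\<in>UNIV. p e * f (apply_event e x))"
proof -
  have "(\<Sum>y\<in>UNIV. trans_prob p x y * f y)
      = (\<Sum>y\<in>UNIV. \<Sum>e\<in>UNIV. (if apply_event e x = y then p e * f y else 0))"
    unfolding trans_prob_alt sum_distrib_right by (intro sum.cong) auto
  also have "\<dots> = (\<Sum>e\<in>UNIV. \<Sum>y\<in>UNIV. (if apply_event e x = y then p e * f y else 0))"
    by (rule sum.swap)
  also have "\<dots> = (\<Sum>e\<in>UNIV. p e * f (apply_event e x))"
    by simp
  finally show ?thesis .
qed

lemma trans_nonneg: "replacement_rule p \<Longrightarrow> trans_prob p x y \<ge> 0"
  unfolding trans_prob_def by (rule sum_nonneg) (simp add: rr_nonneg)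

lemma trans_sum: "replacement_rule p \<Longrightarrow> (\<Sum>y\<in>UNIV. trans_prob p x y) = 1"
  using trans_expect[of p x "\<lambda>_. 1"] by (simp add: rr_sum)

lemma nstep_nonneg: "replacement_rule p \<Longrightarrow> nstep p t x y \<ge> 0"
proof (induction t arbitrary: y)
  case 0 then show ?case by simp
next
  case (Suc t) then show ?case
    by (simp only: nstep.simps) (intro sum_nonneg mult_nonneg_nonneg trans_nonneg; simp)
qed

lemma nstep_sum: "replacement_rule p \<Longrightarrow> (\<Sum>y\<in>UNIV. nstep p t x y) = 1"
proof (induction t)
  case 0 then show ?case by simp
next
  case (Suc t)
  have "(\<Sum>y\<in>UNIV. nstep p (Suc t) x y) = (\<Sum>y\<in>UNIV. \<Sum>z\<in>UNIV. nstep p t x z * trans_prob p z y)"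
    by simp
  also have "\<dots> = (\<Sum>z\<in>UNIV. \<Sum>y\<in>UNIV. nstep p t x z * trans_prob p z y)"
    by (rule sum.swap)
  also have "\<dots> = (\<Sum>z\<in>UNIV. nstep p t x z * (\<Sum>y\<in>UNIV. trans_prob p z y))"
    by (simp add: sum_distrib_left)
  also have "\<dots> = 1" using Suc by (simp add: trans_sum)
  finally show ?case .
qed

lemma nstep_le1: "replacement_rule p \<Longrightarrow> nstep p t x y \<le> 1"
proof -
  assume r: "replacement_rule p"
  have "nstep p t x y \<le> (\<Sum>y\<in>UNIV. nstep p t x y)"
    by (rule member_le_sum) (auto simp: nstep_nonneg r)
  then show ?thesis by (simp add: nstep_sum r)
qed

lemma nstep_CK: "nstep p (s + t) x y = (\<Sum>z\<in>UNIV. nstep p s x z * nstep p t z y)"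
proof (induction t arbitrary: y)
  case 0 then show ?case by (simp add: mult.commute[of _ "if _ then _ else _"] delta_l2)
next
  case (Suc t)
  have "nstep p (s + Suc t) x y = (\<Sum>w\<in>UNIV. nstep p (s+t) x w * trans_prob p w y)" by simp
  also have "\<dots> = (\<Sum>w\<in>UNIV. \<Sum>z\<in>UNIV. nstep p s x z * nstep p t z w * trans_prob p w y)"
    using Suc by (simp add: sum_distrib_right)
  also have "\<dots> = (\<Sum>z\<in>UNIV. \<Sum>w\<in>UNIV. nstep p s x z * nstep p t z w * trans_prob p w y)"
    by (rule sum.swap)
  also have "\<dots> = (\<Sum>z\<in>UNIV. nstep p s x z * nstep p (Suc t) z y)"
    by (simp add: sum_distrib_left mult.assoc)
  finally show ?case .
qed

lemma nstep_one: "nstep p (Suc 0) x y = trans_prob p x y"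
  by (simp add: delta_l)

lemma nstep_back: "nstep p (Suc t) x y = (\<Sum>z\<in>UNIV. trans_prob p x z * nstep p t z y)"
proof -
  have e: "Suc t = Suc 0 + t" by simp
  show ?thesis unfolding e nstep_CK[of p "Suc 0" t x y] nstep_one ..
qed

lemma apply_const: "apply_event e (\<lambda>_. b) = (\<lambda>_. b)"
  by (simp add: apply_event_def)

lemma trans_const: "replacement_rule p \<Longrightarrow> trans_prob p (\<lambda>_. b) y = (if y = (\<lambda>_. b) then 1 else 0)"
  unfolding trans_prob_alt by (simp add: apply_const rr_sum)

lemma nstep_const: "replacement_rule p \<Longrightarrow> nstep p t (\<lambda>_. b) y = (if y = (\<lambda>_. b) then 1 else 0)"
proof (induction t arbitrary: y)
  case 0 then show ?case by auto
next
  case (Suc t)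
  show ?case unfolding nstep_back using Suc
    by (simp add: trans_const delta_l2)
qed

fun apply_list :: "'g event list \<Rightarrow> ('g \<Rightarrow> bool) \<Rightarrow> ('g \<Rightarrow> bool)" where
  "apply_list [] x = x"
| "apply_list (e # es) x = apply_list es (apply_event e x)"

lemma path_bound:
  assumes r: "replacement_rule p"
  shows "nstep p (length es) x (apply_list es x) \<ge> prod_list (map p es)"
proof (induction es arbitrary: x)
  case Nil then show ?case by simp
next
  case (Cons e es)
  let ?z = "apply_event e x"
  have t: "trans_prob p x ?z \<ge> p e"
    unfolding trans_prob_def by (rule member_le_sum) (auto simp: rr_nonneg r)
  have "prod_list (map p (e # es)) = p e * prod_list (map p es)" by simp
  also have "\<dots> \<le> trans_prob p x ?z * nstep p (length es) ?z (apply_list es ?z)"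
    by (rule mult_mono) (use Cons t in \<open>auto simp: rr_nonneg r trans_nonneg prod_nonneg\<close>)
  also have "\<dots> \<le> (\<Sum>z\<in>UNIV. trans_prob p x z * nstep p (length es) z (apply_list es ?z))"
    by (rule member_le_sum[where f="\<lambda>z. trans_prob p x z * nstep p (length es) z (apply_list es ?z)"])
       (auto intro!: mult_nonneg_nonneg simp: trans_nonneg nstep_nonneg r)
  also have "\<dots> = nstep p (length (e # es)) x (apply_list (e # es) x)"
    by (simp only: length_Cons apply_list.simps nstep_back)
  finally show ?case .
qed

lemma apply_list_comp:
  assumes "\<forall>e\<in>set es. canonical_event e"
  shows "apply_list es x = x \<circ> foldr (\<circ>) (map snd es) id"
  using assms
proof (induction es arbitrary: x)
  case Nil then show ?case by simp
next
  case (Cons e es)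
  have "apply_event e x = x \<circ> snd e"
    using Cons.prems by (auto simp: apply_event_def canonical_event_def)
  then show ?case using Cons by (simp add: o_assoc)
qed


lemma nstep_mono_start: "replacement_rule p \<Longrightarrow> monost z \<Longrightarrow> nstep p t z y = (if y = z then 1 else 0)"
  unfolding monost_def using nstep_const by blast

lemma Nm_nonneg: "replacement_rule p \<Longrightarrow> Nm p t x \<ge> 0"
  unfolding Nm_def by (rule sum_nonneg) (simp add: nstep_nonneg)

lemma Nm_le1: "replacement_rule p \<Longrightarrow> Nm p t x \<le> 1"
proof -
  assume r: "replacement_rule p"
  have "Nm p t x \<le> (\<Sum>y\<in>UNIV. nstep p t x y)"
    unfolding Nm_def by (rule sum_mono) (simp add: nstep_nonneg r)
  then show ?thesis by (simp add: nstep_sum r)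
qed

lemma Nm_mono0: "replacement_rule p \<Longrightarrow> monost z \<Longrightarrow> Nm p t z = 0"
  unfolding Nm_def by (rule sum.neutral) (auto simp: nstep_mono_start)

lemma Nm_CK: "Nm p (s + t) x = (\<Sum>z\<in>UNIV. nstep p s x z * Nm p t z)"
proof -
  have "Nm p (s + t) x = (\<Sum>y\<in>UNIV. \<Sum>z\<in>UNIV. nstep p s x z * (if monost y then 0 else nstep p t z y))"
    unfolding Nm_def nstep_CK by (intro sum.cong) auto
  also have "\<dots> = (\<Sum>z\<in>UNIV. \<Sum>y\<in>UNIV. nstep p s x z * (if monost y then 0 else nstep p t z y))"
    by (rule sum.swap)
  also have "\<dots> = (\<Sum>z\<in>UNIV. nstep p s x z * Nm p t z)"
    unfolding Nm_def by (simp add: sum_distrib_left)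
  finally show ?thesis .
qed

lemma Nm_alt: "Nm p s x = (\<Sum>z\<in>UNIV. nstep p s x z * (if monost z then 0 else 1))"
  unfolding Nm_def by (intro sum.cong) auto

lemma Nm_contract:
  assumes r: "replacement_rule p" and c: "\<And>z. \<not> monost z \<Longrightarrow> Nm p t z \<le> d"
  shows "Nm p (s + t) x \<le> d * Nm p s x"
proof -
  have "Nm p (s + t) x \<le> (\<Sum>z\<in>UNIV. nstep p s x z * (if monost z then 0 else d))"
    unfolding Nm_CK
    by (rule sum_mono) (auto intro!: mult_left_mono simp: Nm_mono0 r c nstep_nonneg)
  also have "\<dots> = d * Nm p s x"
    unfolding Nm_alt sum_distrib_left by (intro sum.cong) auto
  finally show ?thesis .
qed

lemma Nm_decr: "replacement_rule p \<Longrightarrow> Nm p (s + t) x \<le> Nm p s x"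
  using Nm_contract[of p t 1 s x] Nm_le1 by auto

lemma sum_minus_one:
  fixes f :: "'a::finite \<Rightarrow> real"
  shows "(\<Sum>y\<in>UNIV. if y = y0 then 0 else f y) = (\<Sum>y\<in>UNIV. f y) - f y0"
proof -
  have "(\<Sum>y\<in>UNIV. f y) = (\<Sum>y\<in>UNIV. (if y = y0 then f y else 0) + (if y = y0 then 0 else f y))"
    by (intro sum.cong) auto
  also have "\<dots> = f y0 + (\<Sum>y\<in>UNIV. if y = y0 then 0 else f y)"
    by (simp add: sum.distrib)
  finally show ?thesis by simp
qed

lemma Nm_bound_path:
  assumes r: "replacement_rule p" and m: "monost y0"
  shows "Nm p t z \<le> 1 - nstep p t z y0"
proof -
  have "Nm p t z \<le> (\<Sum>y\<in>UNIV. if y = y0 then 0 else nstep p t z y)"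
    unfolding Nm_def by (rule sum_mono) (use m in \<open>auto simp: nstep_nonneg r\<close>)
  also have "\<dots> = 1 - nstep p t z y0"
    by (simp add: sum_minus_one nstep_sum r)
  finally show ?thesis .
qed

lemma prod_pos: "\<forall>e\<in>set es. p e > (0::real) \<Longrightarrow> 0 < prod_list (map p es)"
  by (induction es) auto

lemma fix_contract:
  assumes r: "replacement_rule p" and fx: "fixation_axiom p"
  obtains m c where "m > 0" "c > 0" "\<And>z. Nm p m z \<le> 1 - c"
proof -
  obtain g es where es: "es \<noteq> []" "\<forall>e\<in>set es. p e > 0"
     "\<forall>h. foldr (\<circ>) (map snd es) id h = g"
    using fx unfolding fixation_axiom_def by blast
  have can: "\<forall>e\<in>set es. canonical_event e"
    using es(2) r unfolding replacement_rule_def by blast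
  have "\<And>z. Nm p (length es) z \<le> 1 - prod_list (map p es)"
  proof -
    fix z
    have ap: "apply_list es z = (\<lambda>_. z g)"
      using apply_list_comp[OF can, of z] es(3) by (auto simp: o_def)
    have "Nm p (length es) z \<le> 1 - nstep p (length es) z (apply_list es z)"
      by (rule Nm_bound_path[OF r]) (unfold ap monost_def, blast)
    also have "\<dots> \<le> 1 - prod_list (map p es)"
      using path_bound[OF r, of es z] by simp
    finally show "Nm p (length es) z \<le> 1 - prod_list (map p es)" .
  qed
  moreover have "length es > 0" using es(1) by simp
  moreover have "prod_list (map p es) > 0" using prod_pos es(2) by blast
  ultimately show ?thesis using that by blast
qed

lemma Nm_tendsto:
  assumes r: "replacement_rule p" and fx: "fixation_axiom p"
  shows "(\<lambda>t. Nm p t x) \<longlonglongrightarrow> 0"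
proof -
  obtain m c where mc: "m > 0" "c > 0" "\<And>z. Nm p m z \<le> 1 - c"
    using fix_contract[OF r fx] by blast
  have c1: "1 - c \<ge> 0" using mc(3)[of x] Nm_nonneg[OF r, of m x] by simp
  have pw: "Nm p (k * m) x \<le> (1 - c) ^ k" for k
  proof (induction k)
    case 0
    then show ?case using Nm_le1[OF r] by simp
  next
    case (Suc k)
    have "Nm p (Suc k * m) x = Nm p (k * m + m) x" by (simp add: add.commute)
    also have "\<dots> \<le> (1 - c) * Nm p (k * m) x"
      by (rule Nm_contract[OF r]) (use mc(3) in auto)
    also have "\<dots> \<le> (1 - c) * (1 - c) ^ k"
      by (rule mult_left_mono[OF Suc c1])
    finally show ?case by simp
  qed
  show ?thesis
  proof (rule metric_LIMSEQ_I)
    fix r' :: real assume "r' > 0"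
    obtain k where k: "(1 - c) ^ k < r'"
      using real_arch_pow_inv[OF \<open>r' > 0\<close>, of "1 - c"] mc(2) by auto
    show "\<exists>no. \<forall>n\<ge>no. dist (Nm p n x) 0 < r'"
    proof (intro exI allI impI)
      fix n assume "n \<ge> k * m"
      then obtain d where "n = k * m + d" using le_Suc_ex by blast
      then have "Nm p n x \<le> Nm p (k * m) x" using Nm_decr[OF r] by simp
      then show "dist (Nm p n x) 0 < r'" using pw[of k] k Nm_nonneg[OF r, of n x] by simp
    qed
  qed
qed


lemma edge_alt: "edge_w p h g = (\<Sum>e\<in>UNIV. if g \<in> fst e \<and> snd e g = h then p e else 0)"
  unfolding edge_w_def by (simp add: sum.If_cases)

lemma edge_sum:
  "(\<Sum>h\<in>UNIV. edge_w p h g * F h) = (\<Sum>e\<in>UNIV. if g \<in> fst e then p e * F (snd e g) else 0)"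
proof -
  have "(\<Sum>h\<in>UNIV. edge_w p h g * F h) = (\<Sum>h\<in>UNIV. \<Sum>e\<in>UNIV. if g \<in> fst e \<and> snd e g = h then p e * F h else 0)"
    unfolding edge_alt sum_distrib_right by (intro sum.cong) auto
  also have "\<dots> = (\<Sum>e\<in>UNIV. \<Sum>h\<in>UNIV. if g \<in> fst e \<and> snd e g = h then p e * F h else 0)"
    by (rule sum.swap)
  also have "\<dots> = (\<Sum>e\<in>UNIV. if g \<in> fst e then p e * F (snd e g) else 0)"
    by (intro sum.cong) auto
  finally show ?thesis .
qed

lemma death_alt: "death_w p g = (\<Sum>e\<in>UNIV. if g \<in> fst e then p e else 0)"
proof -
  have "death_w p g = (\<Sum>h\<in>UNIV. edge_w p h g * 1)" unfolding death_w_def by simp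
  also have "\<dots> = (\<Sum>e\<in>UNIV. if g \<in> fst e then p e * 1 else 0)" by (rule edge_sum)
  finally show ?thesis by (simp only: mult_1_right)
qed

lemma one_step:
  assumes r: "replacement_rule p" and v: "veq p v"
  shows "(\<Sum>e\<in>UNIV. p e * Lv v (apply_event e z)) = Lv v z"
proof -
  define I where "I = (\<lambda>g. if z g then 1 else (0::real))"
  have inner: "(\<Sum>e\<in>UNIV. p e * (if apply_event e z g then 1 else 0))
     = I g - death_w p g * I g + (\<Sum>h\<in>UNIV. edge_w p h g * I h)" for g
  proof -
    have "(\<Sum>e\<in>UNIV. p e * (if apply_event e z g then 1 else 0))
      = (\<Sum>e\<in>UNIV. p e * I g - (if g \<in> fst e then p e else 0) * I g
            + (if g \<in> fst e then p e * I (snd e g) else 0))"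
      by (intro sum.cong) (auto simp: apply_event_def I_def)
    also have "\<dots> = I g - death_w p g * I g + (\<Sum>h\<in>UNIV. edge_w p h g * I h)"
      unfolding edge_sum death_alt sum.distrib sum_subtractf sum_distrib_right[symmetric]
      by (simp add: rr_sum r)
    finally show ?thesis .
  qed
  have "(\<Sum>e\<in>UNIV. p e * Lv v (apply_event e z))
      = (\<Sum>e\<in>UNIV. \<Sum>g\<in>UNIV. v g * (p e * (if apply_event e z g then 1 else 0)))"
    unfolding Lv_def sum_distrib_left by (intro sum.cong) auto
  also have "\<dots> = (\<Sum>g\<in>UNIV. \<Sum>e\<in>UNIV. v g * (p e * (if apply_event e z g then 1 else 0)))"
    by (rule sum.swap)
  also have "\<dots> = (\<Sum>g\<in>UNIV. v g * (I g - death_w p g * I g + (\<Sum>h\<in>UNIV. edge_w p h g * I h)))"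
    unfolding sum_distrib_left[symmetric] inner ..
  also have "\<dots> = (\<Sum>g\<in>UNIV. v g * I g) - (\<Sum>g\<in>UNIV. death_w p g * v g * I g)
       + (\<Sum>g\<in>UNIV. \<Sum>h\<in>UNIV. v g * edge_w p h g * I h)"
    unfolding sum.distrib[symmetric] sum_subtractf[symmetric]
    by (intro sum.cong) (auto simp: algebra_simps sum_distrib_left)
  also have "(\<Sum>g\<in>UNIV. \<Sum>h\<in>UNIV. v g * edge_w p h g * I h) = (\<Sum>h\<in>UNIV. \<Sum>g\<in>UNIV. v g * edge_w p h g * I h)"
    by (rule sum.swap)
  also have "\<dots> = (\<Sum>h\<in>UNIV. death_w p h * v h * I h)"
  proof (intro sum.cong refl)
    fix h
    have "(\<Sum>g\<in>UNIV. v g * edge_w p h g * I h) = (\<Sum>g\<in>UNIV. edge_w p h g * v g) * I h"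
      by (simp only: sum_distrib_right) (simp add: ac_simps)
    also have "\<dots> = death_w p h * v h * I h" using v unfolding veq_def by simp
    finally show "(\<Sum>g\<in>UNIV. v g * edge_w p h g * I h) = death_w p h * v h * I h" .
  qed
  finally show ?thesis unfolding Lv_def I_def by simp
qed

lemma martingale:
  assumes r: "replacement_rule p" and v: "veq p v"
  shows "(\<Sum>y\<in>UNIV. nstep p t x y * Lv v y) = Lv v x"
proof (induction t)
  case 0 then show ?case by (simp add: delta_l)
next
  case (Suc t)
  have "(\<Sum>y\<in>UNIV. nstep p (Suc t) x y * Lv v y) = (\<Sum>y\<in>UNIV. \<Sum>z\<in>UNIV. nstep p t x z * (trans_prob p z y * Lv v y))"
    by (simp add: sum_distrib_right mult.assoc)
  also have "\<dots> = (\<Sum>z\<in>UNIV. \<Sum>y\<in>UNIV. nstep p t x z * (trans_prob p z y * Lv v y))"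
    by (rule sum.swap)
  also have "\<dots> = (\<Sum>z\<in>UNIV. nstep p t x z * (\<Sum>e\<in>UNIV. p e * Lv v (apply_event e z)))"
    by (simp add: sum_distrib_left[symmetric] trans_expect)
  also have "\<dots> = (\<Sum>z\<in>UNIV. nstep p t x z * Lv v z)"
    by (simp add: one_step r v)
  finally show ?case using Suc by simp
qed

lemma Lv_bound: "\<bar>Lv v y\<bar> \<le> (\<Sum>g\<in>UNIV. \<bar>v g\<bar>)"
  unfolding Lv_def by (rule order_trans[OF sum_abs]) (rule sum_mono, auto)

lemma main_limit:
  assumes r: "replacement_rule p" and fx: "fixation_axiom p" and v: "veq p v"
  shows "(\<lambda>t. nstep p t x (\<lambda>_. True) * (\<Sum>g\<in>UNIV. v g)) \<longlonglongrightarrow> Lv v x"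
proof -
  define A :: "'a \<Rightarrow> bool" where "A = (\<lambda>_. True)"
  define S where "S = (\<Sum>g\<in>UNIV. v g)"
  define M where "M = (\<Sum>g\<in>UNIV. \<bar>v g\<bar>)"
  define D where "D y = Lv v y - (if y = A then S else 0)" for y
  have LA: "Lv v A = S" unfolding Lv_def A_def S_def by simp
  have Dm: "\<bar>D y\<bar> \<le> (if monost y then 0 else M)" for y
  proof (cases "monost y")
    case True
    then obtain b where b: "y = (\<lambda>_. b)" unfolding monost_def by blast
    show ?thesis
    proof (cases b)
      case True then have "D y = 0" using b LA by (simp add: D_def A_def)
      then show ?thesis using \<open>monost y\<close> by simp
    next
      case False
      then have "y \<noteq> A" using b by (auto simp: A_def fun_eq_iff)
      then have "D y = 0" using b False by (simp add: D_def Lv_def)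
      then show ?thesis using \<open>monost y\<close> by simp
    qed
  next
    case False
    then have "y \<noteq> A" unfolding A_def monost_def by blast
    then show ?thesis using False Lv_bound[of v y] by (simp add: D_def M_def)
  qed
  have eq: "nstep p t x A * S - Lv v x = - (\<Sum>y\<in>UNIV. nstep p t x y * D y)" for t
  proof -
    have "Lv v x = (\<Sum>y\<in>UNIV. nstep p t x y * D y + nstep p t x y * (if y = A then S else 0))"
      unfolding martingale[OF r v, of t x, symmetric] D_def by (intro sum.cong) (auto simp: algebra_simps)
    also have "\<dots> = (\<Sum>y\<in>UNIV. nstep p t x y * D y) + (\<Sum>y\<in>UNIV. if y = A then nstep p t x y * S else 0)"
      unfolding sum.distrib by (intro arg_cong2[where f="(+)"] sum.cong) auto
    also have "\<dots> = (\<Sum>y\<in>UNIV. nstep p t x y * D y) + nstep p t x A * S"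
      by simp
    finally show ?thesis by simp
  qed
  have bnd: "norm (nstep p t x A * S - Lv v x) \<le> M * Nm p t x" for t
  proof -
    have "norm (nstep p t x A * S - Lv v x) = \<bar>\<Sum>y\<in>UNIV. nstep p t x y * D y\<bar>" by (simp add: eq)
    also have "\<dots> \<le> (\<Sum>y\<in>UNIV. \<bar>nstep p t x y * D y\<bar>)" by (rule sum_abs)
    also have "\<dots> \<le> (\<Sum>y\<in>UNIV. nstep p t x y * (if monost y then 0 else M))"
    proof (rule sum_mono)
      fix y
      have "nstep p t x y * \<bar>D y\<bar> \<le> nstep p t x y * (if monost y then 0 else M)"
        by (rule mult_left_mono[OF Dm]) (simp add: nstep_nonneg r)
      then show "\<bar>nstep p t x y * D y\<bar> \<le> nstep p t x y * (if monost y then 0 else M)"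
        by (simp add: abs_mult nstep_nonneg r)
    qed
    also have "\<dots> = M * Nm p t x"
      unfolding Nm_alt sum_distrib_left by (intro sum.cong) auto
    finally show ?thesis .
  qed
  have "(\<lambda>t. M * Nm p t x) \<longlonglongrightarrow> 0"
    using tendsto_mult_right_zero[OF Nm_tendsto[OF r fx]] by simp
  then have "(\<lambda>t. nstep p t x A * S - Lv v x) \<longlonglongrightarrow> 0"
    by (rule Lim_null_comparison[rotated]) (rule always_eventually, use bnd in simp)
  then show ?thesis unfolding A_def S_def by (rule LIM_zero_cancel)
qed


lemma Lv_single: "Lv v (ind_state {g}) = v g"
proof -
  have "Lv v (ind_state {g}) = (\<Sum>h\<in>UNIV. if h = g then v h else 0)"
    unfolding Lv_def ind_state_def by (intro sum.cong) auto
  then show ?thesis by simp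
qed

lemma ind_UNIV: "ind_state UNIV = (\<lambda>_. True)" by (simp add: ind_state_def)
lemma ind_empty: "ind_state {} = (\<lambda>_. False)" by (simp add: ind_state_def)

lemma lim_unique_v:
  fixes p :: "'g::finite event \<Rightarrow> real"
  assumes r: "replacement_rule p" and fx: "fixation_axiom p" and v: "veq p v" and w: "veq p w"
    and sv: "(\<Sum>g\<in>UNIV. v g) = real CARD('g)" and sw: "(\<Sum>g\<in>UNIV. w g) = real CARD('g)"
  shows "v = w"
proof
  fix g
  have a: "(\<lambda>t. nstep p t (ind_state {g}) (\<lambda>_. True) * real CARD('g)) \<longlonglongrightarrow> v g"
    using main_limit[OF r fx v, of "ind_state {g}"] by (simp add: Lv_single sv)
  have b: "(\<lambda>t. nstep p t (ind_state {g}) (\<lambda>_. True) * real CARD('g)) \<longlonglongrightarrow> w g"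
    using main_limit[OF r fx w, of "ind_state {g}"] by (simp add: Lv_single sw)
  show "v g = w g" using LIMSEQ_unique[OF a b] .
qed

lemma veq_scale: "veq p v \<Longrightarrow> veq p (\<lambda>g. c * v g)"
  unfolding veq_def by (simp add: sum_distrib_left algebra_simps)

lemma veq_exists:
  fixes p :: "'g::finite event \<Rightarrow> real"
  assumes r: "replacement_rule p" and fx: "fixation_axiom p"
  shows "\<exists>v. veq p v \<and> (\<Sum>g\<in>UNIV. v g) = real CARD('g)"
proof -
  define f :: "real^'g \<Rightarrow> real^'g" where
    "f w = (\<chi> g. death_w p g * w$g - (\<Sum>h\<in>UNIV. edge_w p g h * w$h))" for w
  have lin: "linear f"
    by (rule linearI) (simp_all add: f_def vec_eq_iff algebra_simps sum.distrib sum_distrib_left)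
  have sum0: "(\<Sum>g\<in>UNIV. f w $ g) = 0" for w
  proof -
    have "(\<Sum>g\<in>UNIV. f w $ g) = (\<Sum>g\<in>UNIV. death_w p g * w$g) - (\<Sum>g\<in>UNIV. \<Sum>h\<in>UNIV. edge_w p g h * w$h)"
      by (simp add: f_def sum_subtractf)
    also have "(\<Sum>g\<in>UNIV. \<Sum>h\<in>UNIV. edge_w p g h * w$h) = (\<Sum>h\<in>UNIV. \<Sum>g\<in>UNIV. edge_w p g h * w$h)"
      by (rule sum.swap)
    also have "\<dots> = (\<Sum>h\<in>UNIV. death_w p h * w$h)"
      by (simp add: death_w_def sum_distrib_right)
    finally show ?thesis by simp
  qed
  have "\<not> surj f"
  proof
    assume "surj f"
    then obtain w where "f w = (\<chi> g. 1)" by (metis surjE)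
    then have "(\<Sum>g\<in>UNIV. f w $ g) = real CARD('g)" by simp
    then show False using sum0[of w] by simp
  qed
  then have "\<not> inj f" using lin_surj[OF lin] by blast
  then obtain x y where xy: "x \<noteq> y" "f x = f y" unfolding inj_def by blast
  define u where "u = x - y"
  have fu: "f u = 0" using xy(2) linear_diff[OF lin, of x y] by (simp add: u_def)
  have "u \<noteq> 0" using xy(1) by (simp add: u_def)
  then obtain g0 where g0: "u $ g0 \<noteq> 0" by (metis vec_eq_iff zero_index)
  define v where "v g = u $ g" for g
  have vv: "veq p v"
    unfolding veq_def
  proof
    fix g
    have "f u $ g = 0" using fu by simp
    then show "death_w p g * v g = (\<Sum>h\<in>UNIV. edge_w p g h * v h)" by (simp add: f_def v_def)
  qed
  define S where "S = (\<Sum>g\<in>UNIV. v g)"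
  have "S \<noteq> 0"
  proof
    assume S0: "S = 0"
    have "(\<lambda>t. nstep p t (ind_state {g0}) (\<lambda>_. True) * S) \<longlonglongrightarrow> v g0"
      using main_limit[OF r fx vv, of "ind_state {g0}"] by (simp add: Lv_single S_def)
    then have "(\<lambda>t. 0::real) \<longlonglongrightarrow> v g0" using S0 by simp
    then have "v g0 = 0" using LIMSEQ_unique[OF _ tendsto_const] by metis
    then show False using g0 by (simp add: v_def)
  qed
  define v' where "v' g = (real CARD('g) / S) * v g" for g
  have "veq p v'" unfolding v'_def by (rule veq_scale[OF vv])
  moreover have "(\<Sum>g\<in>UNIV. v' g) = real CARD('g)"
    unfolding v'_def sum_distrib_left[symmetric] using \<open>S \<noteq> 0\<close> by (simp add: S_def)
  ultimately show ?thesis by blast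
qed

lemma repr_props:
  fixes p :: "'g::finite event \<Rightarrow> real"
  assumes r: "replacement_rule p" and fx: "fixation_axiom p"
  shows "veq p (repr_value p) \<and> (\<Sum>g\<in>UNIV. repr_value p g) = real CARD('g)"
proof -
  have ex1: "\<exists>!v. (\<forall>g. death_w p g * v g = (\<Sum>h\<in>UNIV. edge_w p g h * v h))
                        \<and> (\<Sum>g\<in>UNIV. v g) = real (card (UNIV :: 'g set))"
    using veq_exists[OF r fx] lim_unique_v[OF r fx] unfolding veq_def by blast
  show ?thesis
    using theI'[OF ex1] unfolding repr_value_def veq_def by blast
qed


lemma mu_sum:
  fixes F :: "'a::finite \<Rightarrow> 'b::finite" and c :: "'a \<Rightarrow> real"
  shows "(\<Sum>x\<in>UNIV. (\<Sum>g\<in>{g. x = F g}. c g) * h x) = (\<Sum>g\<in>UNIV. c g * h (F g))"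
proof -
  have "(\<Sum>x\<in>UNIV. (\<Sum>g\<in>{g. x = F g}. c g) * h x) = (\<Sum>x\<in>UNIV. \<Sum>g\<in>UNIV. if x = F g then c g * h x else 0)"
    by (simp add: sum.If_cases sum_distrib_right)
  also have "\<dots> = (\<Sum>g\<in>UNIV. \<Sum>x\<in>UNIV. if x = F g then c g * h x else 0)"
    by (rule sum.swap)
  also have "\<dots> = (\<Sum>g\<in>UNIV. c g * h (F g))" by simp
  finally show ?thesis .
qed

lemma mass_split:
  fixes p :: "'g::finite event \<Rightarrow> real"
  assumes r: "replacement_rule p"
  shows "nstep p t x (\<lambda>_. True) + nstep p t x (\<lambda>_. False) + Nm p t x = 1"
proof -
  have ne: "(\<lambda>_::'g. True) \<noteq> (\<lambda>_. False)" by (simp add: fun_eq_iff)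
  have mono_iff: "monost y \<longleftrightarrow> y = (\<lambda>_. True) \<or> y = (\<lambda>_. False)" for y :: "'g \<Rightarrow> bool"
    unfolding monost_def by (metis (full_types))
  have "1 = (\<Sum>y\<in>UNIV. nstep p t x y)" by (simp add: nstep_sum r)
  also have "\<dots> = (\<Sum>y\<in>UNIV. (if y = (\<lambda>_. True) then nstep p t x y else 0)
                + (if y = (\<lambda>_. False) then nstep p t x y else 0)
                + (if monost y then 0 else nstep p t x y))"
    by (intro sum.cong refl) (use ne mono_iff in auto)
  also have "\<dots> = nstep p t x (\<lambda>_. True) + nstep p t x (\<lambda>_. False) + Nm p t x"
    unfolding sum.distrib Nm_def by simp
  finally show ?thesis by simp
qed

lemma xhat_Lv: "xhat p x = Lv (repr_value p) x / real CARD('g)"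
  for p :: "'g::finite event \<Rightarrow> real"
  unfolding xhat_def Lv_def by simp

theorem theorem7:
  fixes p :: "'g::finite event \<Rightarrow> real"
  assumes "replacement_rule p"
    and "fixation_axiom p"
  shows "(\<forall>x. (\<lambda>t. nstep p t x (ind_state UNIV)) \<longlonglongrightarrow> xhat p x)
       \<and> (\<forall>g. (\<lambda>t. nstep p t (ind_state {g}) (ind_state UNIV))
               \<longlonglongrightarrow> repr_value p g / real (card (UNIV :: 'g set)))
       \<and> rho_A p = bhat p / (real (card (UNIV :: 'g set)) * birth_total p)
       \<and> rho_a p = bhat p / (real (card (UNIV :: 'g set)) * birth_total p)"
proof -
  note r = assms(1) and fx = assms(2)
  define v where "v = repr_value p"
  define n where "n = real CARD('g)"
  have n0: "n \<noteq> 0" by (simp add: n_def)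
  have vv: "veq p v" and sv: "(\<Sum>g\<in>UNIV. v g) = n"
    using repr_props[OF r fx] by (auto simp: v_def n_def)
  have L1: "(\<lambda>t. nstep p t x (ind_state UNIV)) \<longlonglongrightarrow> xhat p x" for x
  proof -
    have "(\<lambda>t. nstep p t x (\<lambda>_. True) * n) \<longlonglongrightarrow> Lv v x"
      using main_limit[OF r fx vv, of x] by (simp add: sv)
    then have "(\<lambda>t. nstep p t x (\<lambda>_. True) * n / n) \<longlonglongrightarrow> Lv v x / n"
      using n0 by (intro tendsto_intros)
    then show ?thesis using n0 by (simp add: ind_UNIV xhat_Lv v_def n_def)
  qed
  have xs: "xhat p (ind_state {g}) = v g / n" for g
    by (simp add: xhat_Lv Lv_single v_def n_def)
  have L2: "(\<lambda>t. nstep p t (ind_state {g}) (ind_state UNIV)) \<longlonglongrightarrow> v g / n" for g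
    using L1[of "ind_state {g}"] by (simp add: xs)
  have L3: "(\<lambda>t. nstep p t x (ind_state {})) \<longlonglongrightarrow> 1 - xhat p x" for x
  proof -
    have e: "nstep p t x (ind_state {}) = 1 - nstep p t x (ind_state UNIV) - Nm p t x" for t
      using mass_split[OF r, of t x] by (simp add: ind_UNIV ind_empty)
    have "(\<lambda>t. 1 - nstep p t x (ind_state UNIV) - Nm p t x) \<longlonglongrightarrow> 1 - xhat p x - 0"
      by (intro tendsto_intros L1 Nm_tendsto[OF r fx])
    then show ?thesis by (simp add: e)
  qed
  have xc: "xhat p (ind_state (UNIV - {g})) = 1 - v g / n" for g
  proof -
    have "Lv v (ind_state (UNIV - {g})) = (\<Sum>h\<in>UNIV. v h - (if h = g then v h else 0))"
      unfolding Lv_def ind_state_def by (intro sum.cong) auto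
    also have "\<dots> = n - v g" by (simp add: sum_subtractf sv)
    finally show ?thesis using n0 by (simp add: xhat_Lv v_def[symmetric] n_def[symmetric] field_simps)
  qed
  have bh: "bhat p = (\<Sum>g\<in>UNIV. death_w p g * v g)"
  proof -
    have "bhat p = (\<Sum>h\<in>UNIV. \<Sum>g\<in>UNIV. edge_w p g h * v h)"
      unfolding bhat_def v_def by (rule sum.swap)
    also have "\<dots> = (\<Sum>h\<in>UNIV. death_w p h * v h)"
      by (simp add: death_w_def sum_distrib_right)
    finally show ?thesis .
  qed
  have target: "(\<Sum>g\<in>UNIV. death_w p g / birth_total p * (v g / n)) = bhat p / (n * birth_total p)"
    unfolding bh by (simp add: sum_divide_distrib[symmetric] algebra_simps)
  have rA: "rho_A p = bhat p / (n * birth_total p)"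
  proof -
    have "rho_A p = (\<Sum>g\<in>UNIV. death_w p g / birth_total p * lim (\<lambda>t. nstep p t (ind_state {g}) (ind_state UNIV)))"
      unfolding rho_A_def mu_A_def by (rule mu_sum)
    also have "\<dots> = (\<Sum>g\<in>UNIV. death_w p g / birth_total p * (v g / n))"
    proof (intro sum.cong refl)
      fix g
      have "lim (\<lambda>t. nstep p t (ind_state {g}) (ind_state UNIV)) = v g / n" using L2 by (rule limI)
      then show "death_w p g / birth_total p * lim (\<lambda>t. nstep p t (ind_state {g}) (ind_state UNIV))
        = death_w p g / birth_total p * (v g / n)" by simp
    qed
    finally show ?thesis using target by simp
  qed
  have ra: "rho_a p = bhat p / (n * birth_total p)"
  proof -
    have "rho_a p = (\<Sum>g\<in>UNIV. death_w p g / birth_total p * lim (\<lambda>t. nstep p t (ind_state (UNIV - {g})) (ind_state {})))"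
      unfolding rho_a_def mu_a_def by (rule mu_sum)
    also have "\<dots> = (\<Sum>g\<in>UNIV. death_w p g / birth_total p * (v g / n))"
    proof (intro sum.cong refl)
      fix g
      have "lim (\<lambda>t. nstep p t (ind_state (UNIV - {g})) (ind_state {})) = 1 - xhat p (ind_state (UNIV - {g}))"
        using L3 by (rule limI)
      then show "death_w p g / birth_total p * lim (\<lambda>t. nstep p t (ind_state (UNIV - {g})) (ind_state {}))
        = death_w p g / birth_total p * (v g / n)" by (simp add: xc)
    qed
    finally show ?thesis using target by simp
  qed
  show ?thesis using L1 L2 rA ra by (simp add: v_def n_def)
qed

end
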